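(* In the two-door cascading memoryless semi-fractional setting, for every $x\in[0,1]$, every real $t\ge0$ and every semi-fractional sequence $\pi$, letting $y=x/(q_2+p_2x)$, $$\mathbb{E}_x[1^t\cdot\pi]=t+\mathbb{E}_{q_1^tx}[\pi],\qquad \mathbb{E}_x[2\cdot\pi]=c+\frac{x}{y}\,\mathbb{E}_y[\pi].$$
   Context: Two cascading memoryless doors with durations: parameters $p_1,p_2\in(0,1)$, $q_1=1-p_1$, $q_2=1-p_2$, and $c>0$. A semi-fractional sequence is an infinite sequence of knocks of the form $1^t$ ($t\ge0$ real) and $2$ (consecutive 1-knocks $1^a1^b$ being identified with $1^{a+b}$). A 1-knock $1^t$ takes $t$ time units and, if door 1 is closed, opens it with probability $1-q_1^t$, independently of everything else. A 2-knock takes $c$ time units and opens door 2 with probability $p_2$ (independently) if door 1 is open at that time, and with probability $0$ otherwise. There is no feedback; the running time is the time at which both doors are open. For $x\in[0,1]$, $\mathbb{E}_x[\pi]$ denotes the expected running time of $\pi$ when started with door 2 closed and door 1 closed with probability $x$ (open with probability $1-x$); $\mathbb{E}[\pi]=\mathbb{E}_1[\pi]$. For a knock $a$ and a sequence $\pi$, $a\cdot\pi$ is the sequence starting with $a$ followed by $\pi$. *)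

theory Defs
  imports "HOL-Probability.Probability"
begin

text \<open>Knocks: \<open>K1 t\<close> is the 1-knock 1^t (duration t), \<open>K2\<close> is the 2-knock (duration c).
  A semi-fractional sequence is an infinite sequence of knocks, i.e. a function nat => knock,
  all of whose 1-knocks have nonnegative duration.  (Merging consecutive 1-knocks does not
  change the running time in the model below, so raw sequences are used.)\<close>

datatype knock = K1 real | K2

definition semi_fractional :: "(nat \<Rightarrow> knock) \<Rightarrow> bool" where
  "semi_fractional \<pi> \<longleftrightarrow> (\<forall>i. case \<pi> i of K1 s \<Rightarrow> 0 \<le> s | K2 \<Rightarrow> True)"

definition kcons :: "knock \<Rightarrow> (nat \<Rightarrow> knock) \<Rightarrow> (nat \<Rightarrow> knock)" where
  "kcons a \<pi> = case_nat a \<pi>"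

definition dur :: "real \<Rightarrow> knock \<Rightarrow> real" where
  "dur c a = (case a of K1 s \<Rightarrow> s | K2 \<Rightarrow> c)"

definition time1_before :: "(nat \<Rightarrow> knock) \<Rightarrow> nat \<Rightarrow> real" where
  "time1_before \<pi> k = (\<Sum>i<k. case \<pi> i of K1 s \<Rightarrow> s | K2 \<Rightarrow> 0)"

definition end_time :: "real \<Rightarrow> (nat \<Rightarrow> knock) \<Rightarrow> nat \<Rightarrow> real" where
  "end_time c \<pi> k = (\<Sum>i\<le>k. dur c (\<pi> i))"

text \<open>Outcome \<omega> = (d1, (U, coin)): d1 = door 1 initially closed; if so, door 1 opens once the
  accumulated 1-knock time reaches U, where U is exponential with P(U > s) = q1^s (memoryless;
  a 1-knock 1^t opens a closed door 1 with probability 1 - q1^t, independently);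
  coin k = the 2-knock at position k would open door 2 (probability p2, independent).\<close>
definition opens2 :: "(nat \<Rightarrow> knock) \<Rightarrow> bool \<times> real \<times> (nat \<Rightarrow> bool) \<Rightarrow> nat \<Rightarrow> bool" where
  "opens2 \<pi> \<omega> k = (case \<omega> of (d1, U, coin) \<Rightarrow>
      \<pi> k = K2 \<and> (\<not> d1 \<or> U \<le> time1_before \<pi> k) \<and> coin k)"

definition run_time :: "real \<Rightarrow> (nat \<Rightarrow> knock) \<Rightarrow> bool \<times> real \<times> (nat \<Rightarrow> bool) \<Rightarrow> ennreal" where
  "run_time c \<pi> \<omega> =
     (if \<exists>k. opens2 \<pi> \<omega> k then ennreal (end_time c \<pi> (LEAST k. opens2 \<pi> \<omega> k)) else \<infinity>)"

text \<open>Probability space: door 1 initially closed with probability x, U exponential with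
  rate -ln q1 (so P(U > s) = q1 powr s), independent Bernoulli(p2) coins.\<close>
definition door_space :: "real \<Rightarrow> real \<Rightarrow> real \<Rightarrow> (bool \<times> real \<times> (nat \<Rightarrow> bool)) measure" where
  "door_space p1 p2 x =
     measure_pmf (bernoulli_pmf x) \<Otimes>\<^sub>M
       (density lborel (exponential_density (- ln (1 - p1))) \<Otimes>\<^sub>M
        (\<Pi>\<^sub>M i\<in>(UNIV::nat set). measure_pmf (bernoulli_pmf p2)))"

definition exp_time :: "real \<Rightarrow> real \<Rightarrow> real \<Rightarrow> real \<Rightarrow> (nat \<Rightarrow> knock) \<Rightarrow> ennreal" where
  "exp_time p1 p2 c x \<pi> = (\<integral>\<^sup>+ \<omega>. run_time c \<pi> \<omega> \<partial>door_space p1 p2 x)"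

end

theory Submission
  imports Defs
begin


lemma time1_Suc_kcons:
  "time1_before (kcons a \<pi>) (Suc k) = (case a of K1 s \<Rightarrow> s | K2 \<Rightarrow> 0) + time1_before \<pi> k"
  unfolding time1_before_def kcons_def by (subst sum.lessThan_Suc_shift) simp

lemma end_Suc_kcons: "end_time c (kcons a \<pi>) (Suc k) = dur c a + end_time c \<pi> k"
  unfolding end_time_def kcons_def by (subst sum.atMost_Suc_shift) simp

lemma end_0_kcons: "end_time c (kcons a \<pi>) 0 = dur c a"
  unfolding end_time_def kcons_def by simp

lemma dur_nonneg: "semi_fractional \<pi> \<Longrightarrow> 0 \<le> c \<Longrightarrow> 0 \<le> dur c (\<pi> i)"
  unfolding semi_fractional_def dur_def by (auto split: knock.splits dest: spec[of _ i])

lemma time1_nonneg: "semi_fractional \<pi> \<Longrightarrow> 0 \<le> time1_before \<pi> k"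
  unfolding time1_before_def semi_fractional_def
  by (intro sum_nonneg) (auto split: knock.splits dest: spec)

lemma end_nonneg: "semi_fractional \<pi> \<Longrightarrow> 0 \<le> c \<Longrightarrow> 0 \<le> end_time c \<pi> k"
  unfolding end_time_def by (intro sum_nonneg dur_nonneg) auto

lemma end_mono: "semi_fractional \<pi> \<Longrightarrow> 0 \<le> c \<Longrightarrow> k \<le> k' \<Longrightarrow> end_time c \<pi> k \<le> end_time c \<pi> k'"
  unfolding end_time_def by (intro sum_mono2 dur_nonneg) auto

lemma sf_kcons: "semi_fractional \<pi> \<Longrightarrow> (case a of K1 s \<Rightarrow> 0 \<le> s | K2 \<Rightarrow> True) \<Longrightarrow> semi_fractional (kcons a \<pi>)"
  unfolding semi_fractional_def kcons_def by (auto split: nat.splits)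

lemma run_shift:
  assumes "\<not> opens2 \<pi>' \<omega> 0" "\<And>k. opens2 \<pi>' \<omega> (Suc k) = opens2 \<pi> \<omega>' k"
    "\<And>k. end_time c \<pi>' (Suc k) = a + end_time c \<pi> k" "0 \<le> a" "\<And>k. 0 \<le> end_time c \<pi> k"
  shows "run_time c \<pi>' \<omega> = ennreal a + run_time c \<pi> \<omega>'"
proof (cases "\<exists>k. opens2 \<pi> \<omega>' k")
  case True
  then obtain k where k: "opens2 \<pi> \<omega>' k" by blast
  then have "opens2 \<pi>' \<omega> (Suc k)" using assms by simp
  then have "(LEAST n. opens2 \<pi>' \<omega> n) = Suc (LEAST m. opens2 \<pi>' \<omega> (Suc m))"
    by (rule Least_Suc) (use assms in auto)
  then show ?thesis using True assms unfolding run_time_def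
    by (auto simp: ennreal_plus)
next
  case False
  then have "\<not> (\<exists>k. opens2 \<pi>' \<omega> k)" using assms by (metis not0_implies_Suc)
  then have "run_time c \<pi>' \<omega> = \<top>" "run_time c \<pi> \<omega>' = \<top>" using False unfolding run_time_def by auto
  then show ?thesis by simp
qed

lemma run_K1:
  assumes "semi_fractional \<pi>" "0 \<le> c" "0 \<le> t"
  shows "run_time c (kcons (K1 t) \<pi>) (d, u, coin) = ennreal t + run_time c \<pi> (d, u - t, \<lambda>i. coin (Suc i))"
  by (rule run_shift) (auto simp: opens2_def time1_Suc_kcons end_Suc_kcons dur_def
      end_nonneg assms, auto simp: kcons_def)

lemma run_K2:
  assumes "semi_fractional \<pi>" "0 \<le> c"
  shows "run_time c (kcons K2 \<pi>) (d, u, coin) = ennreal c +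
     (if (\<not> d \<or> u \<le> 0) \<and> coin 0 then 0 else run_time c \<pi> (d, u, \<lambda>i. coin (Suc i)))"
proof (cases "(\<not> d \<or> u \<le> 0) \<and> coin 0")
  case True
  then have o: "opens2 (kcons K2 \<pi>) (d, u, coin) 0"
    by (auto simp: opens2_def kcons_def time1_before_def)
  then have "(LEAST k. opens2 (kcons K2 \<pi>) (d, u, coin) k) = 0" by simp
  then show ?thesis using o True unfolding run_time_def by (auto simp: end_0_kcons dur_def)
next
  case False
  have "run_time c (kcons K2 \<pi>) (d, u, coin) = ennreal c + run_time c \<pi> (d, u, \<lambda>i. coin (Suc i))"
    by (rule run_shift) (use False in \<open>auto simp: opens2_def time1_Suc_kcons end_Suc_kcons dur_def
      end_nonneg assms, auto simp: kcons_def time1_before_def\<close>)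
  moreover have "(if (\<not> d \<or> u \<le> 0) \<and> coin 0 then 0 else run_time c \<pi> (d, u, \<lambda>i. coin (Suc i)))
     = run_time c \<pi> (d, u, \<lambda>i. coin (Suc i))" using False by (rule if_not_P)
  ultimately show ?thesis by simp
qed

lemma run_False: "run_time c \<pi> (False, u, coin) = run_time c \<pi> (False, u', coin)"
proof -
  have "opens2 \<pi> (False, u, coin) = opens2 \<pi> (False, u', coin)" by (simp add: fun_eq_iff opens2_def)
  then show ?thesis by (simp add: run_time_def)
qed

lemma run_True_neg: "semi_fractional \<pi> \<Longrightarrow> u \<le> 0 \<Longrightarrow> run_time c \<pi> (True, u, coin) = run_time c \<pi> (False, u', coin)"
proof -
  assume a: "semi_fractional \<pi>" "u \<le> 0"
  have "opens2 \<pi> (True, u, coin) = opens2 \<pi> (False, u', coin)"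
    using time1_nonneg[OF a(1)] a(2) by (auto simp: opens2_def fun_eq_iff intro: order_trans)
  then show ?thesis by (simp add: run_time_def)
qed

lemma run_INF:
  assumes "semi_fractional \<pi>" "0 \<le> c"
  shows "run_time c \<pi> \<omega> = (INF k. if opens2 \<pi> \<omega> k then ennreal (end_time c \<pi> k) else \<top>)"
proof (cases "\<exists>k. opens2 \<pi> \<omega> k")
  case True
  let ?L = "LEAST k. opens2 \<pi> \<omega> k"
  have L: "opens2 \<pi> \<omega> ?L" using True by (metis LeastI)
  have r: "run_time c \<pi> \<omega> = ennreal (end_time c \<pi> ?L)" unfolding run_time_def using True by simp
  have "ennreal (end_time c \<pi> ?L) \<le> (INF k. if opens2 \<pi> \<omega> k then ennreal (end_time c \<pi> k) else \<top>)"
  proof (rule INF_greatest)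
    fix k assume "k \<in> (UNIV::nat set)"
    show "ennreal (end_time c \<pi> ?L) \<le> (if opens2 \<pi> \<omega> k then ennreal (end_time c \<pi> k) else \<top>)"
      using end_mono[OF assms Least_le[of "opens2 \<pi> \<omega>" k]] by (auto intro: ennreal_leI)
  qed
  moreover have "(INF k. if opens2 \<pi> \<omega> k then ennreal (end_time c \<pi> k) else \<top>) \<le> ennreal (end_time c \<pi> ?L)"
    by (rule INF_lower2[of ?L]) (use L in auto)
  ultimately show ?thesis using r by simp
next
  case False
  then show ?thesis unfolding run_time_def by simp
qed



abbreviation EMs :: "real \<Rightarrow> real measure" where
  "EMs p1 \<equiv> density lborel (exponential_density (- ln (1 - p1)))"
abbreviation CMs :: "real \<Rightarrow> (nat \<Rightarrow> bool) measure" where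
  "CMs p2 \<equiv> \<Pi>\<^sub>M i\<in>(UNIV::nat set). measure_pmf (bernoulli_pmf p2)"

lemma door_eq: "door_space p1 p2 x = measure_pmf (bernoulli_pmf x) \<Otimes>\<^sub>M (EMs p1 \<Otimes>\<^sub>M CMs p2)"
  by (simp add: door_space_def)

lemma pred_opens2:
  "Measurable.pred (measure_pmf B \<Otimes>\<^sub>M (EMs p1 \<Otimes>\<^sub>M CMs p2)) (\<lambda>\<omega>. opens2 \<pi> \<omega> k)"
proof -
  have e: "(\<lambda>\<omega>. opens2 \<pi> \<omega> k) = (\<lambda>\<omega>. \<pi> k = K2 \<and> (\<not> fst \<omega> \<or> fst (snd \<omega>) \<le> time1_before \<pi> k) \<and> snd (snd \<omega>) k)"
    by (auto simp: fun_eq_iff opens2_def split: prod.splits)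
  have m1: "(\<lambda>\<omega>::bool\<times>real\<times>(nat\<Rightarrow>bool). fst \<omega>) \<in> measurable (measure_pmf B \<Otimes>\<^sub>M (EMs p1 \<Otimes>\<^sub>M CMs p2)) (count_space UNIV)"
    by (rule measurable_compose[OF measurable_fst]) simp
  have m2: "(\<lambda>\<omega>::bool\<times>real\<times>(nat\<Rightarrow>bool). snd (snd \<omega>) k) \<in> measurable (measure_pmf B \<Otimes>\<^sub>M (EMs p1 \<Otimes>\<^sub>M CMs p2)) (count_space UNIV)"
  proof -
    have "(\<lambda>\<omega>::bool\<times>real\<times>(nat\<Rightarrow>bool). snd (snd \<omega>) k) \<in> measurable (measure_pmf B \<Otimes>\<^sub>M (EMs p1 \<Otimes>\<^sub>M CMs p2)) (measure_pmf (bernoulli_pmf p2))"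
      by measurable
    moreover have "measurable (measure_pmf B \<Otimes>\<^sub>M (EMs p1 \<Otimes>\<^sub>M CMs p2)) (measure_pmf (bernoulli_pmf p2))
      = measurable (measure_pmf B \<Otimes>\<^sub>M (EMs p1 \<Otimes>\<^sub>M CMs p2)) (count_space UNIV)"
      by (rule measurable_cong_sets) auto
    ultimately show ?thesis by simp
  qed
  show ?thesis unfolding e using m1 m2 unfolding pred_def by measurable
qed

lemma run_meas:
  assumes "semi_fractional \<pi>" "0 \<le> c"
  shows "run_time c \<pi> \<in> borel_measurable (measure_pmf B \<Otimes>\<^sub>M (EMs p1 \<Otimes>\<^sub>M CMs p2))"
proof -
  have "run_time c \<pi> = (\<lambda>\<omega>. INF k. if opens2 \<pi> \<omega> k then ennreal (end_time c \<pi> k) else \<top>)"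
    using run_INF[OF assms] by blast
  moreover note pred_opens2[measurable]
  ultimately show ?thesis by (simp only:) measurable
qed

lemma run_meas_d:
  assumes "semi_fractional \<pi>" "0 \<le> c"
  shows "(\<lambda>w. run_time c \<pi> (d, w)) \<in> borel_measurable (EMs p1 \<Otimes>\<^sub>M CMs p2)"
  by (rule measurable_compose[OF measurable_Pair1' run_meas[OF assms, of "bernoulli_pmf 0"]]) simp

lemma run_meas_u:
  assumes "semi_fractional \<pi>" "0 \<le> c"
  shows "(\<lambda>coin. run_time c \<pi> (d, u, coin)) \<in> borel_measurable (CMs p2)"
  using measurable_compose[OF measurable_Pair1' run_meas_d[OF assms, of d p1 p2], of u] by simp

lemma shift_meas: "(\<lambda>coin. \<lambda>i. coin (Suc i)) \<in> measurable (CMs p2) (CMs p2)"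
  by (rule measurable_PiM_single'[where f="\<lambda>i \<omega>. \<omega> (Suc i)", simplified])
     (auto intro: measurable_component_singleton simp: space_PiM)

lemma pCM: "prob_space (CMs p2)"
  by (rule prob_space_PiM) (simp add: prob_space_measure_pmf)

lemma pEM: "0 < p1 \<Longrightarrow> p1 < 1 \<Longrightarrow> prob_space (EMs p1)"
  by (rule prob_space_exponential_density) simp

lemma dec:
  fixes f :: "bool \<times> 'b \<Rightarrow> ennreal"
  assumes "0 \<le> x" "x \<le> 1" "sigma_finite_measure N"
    "f \<in> borel_measurable (measure_pmf (bernoulli_pmf x) \<Otimes>\<^sub>M N)"
  shows "integral\<^sup>N (measure_pmf (bernoulli_pmf x) \<Otimes>\<^sub>M N) f =
     ennreal x * (\<integral>\<^sup>+ w. f (True, w) \<partial>N) + ennreal (1 - x) * (\<integral>\<^sup>+ w. f (False, w) \<partial>N)"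
proof -
  have "integral\<^sup>N (measure_pmf (bernoulli_pmf x) \<Otimes>\<^sub>M N) f =
     (\<integral>\<^sup>+ d. \<integral>\<^sup>+ w. f (d, w) \<partial>N \<partial>measure_pmf (bernoulli_pmf x))"
    by (rule sigma_finite_measure.nn_integral_fst[symmetric, OF assms(3,4)])
  also have "\<dots> = (\<Sum>d\<in>UNIV. (\<integral>\<^sup>+ w. f (d, w) \<partial>N) * ennreal (pmf (bernoulli_pmf x) d))"
    by (rule nn_integral_measure_pmf_support) auto
  also have "\<dots> = ennreal x * (\<integral>\<^sup>+ w. f (True, w) \<partial>N) + ennreal (1 - x) * (\<integral>\<^sup>+ w. f (False, w) \<partial>N)"
    using assms by (simp add: UNIV_bool mult.commute)
  finally show ?thesis .
qed

lemma coin_split: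
  assumes "0 \<le> p2" "p2 \<le> 1" "h \<in> borel_measurable (CMs p2)"
  shows "integral\<^sup>N (CMs p2) h =
     ennreal p2 * (\<integral>\<^sup>+ w. h (case_nat True w) \<partial>CMs p2) + ennreal (1 - p2) * (\<integral>\<^sup>+ w. h (case_nat False w) \<partial>CMs p2)"
proof -
  interpret S: sequence_space "measure_pmf (bernoulli_pmf p2)"
    by (simp add: sequence_space_def product_prob_space_def product_prob_space_axioms_def
        product_sigma_finite_def prob_space_measure_pmf prob_space_imp_sigma_finite)
  have m: "(\<lambda>(s, \<omega>). case_nat s \<omega>) \<in> measurable (measure_pmf (bernoulli_pmf p2) \<Otimes>\<^sub>M CMs p2) (CMs p2)"
    by (simp add: split_beta') measurable
  have "integral\<^sup>N (CMs p2) h = integral\<^sup>N (distr (measure_pmf (bernoulli_pmf p2) \<Otimes>\<^sub>M CMs p2) (CMs p2) (\<lambda>(s, \<omega>). case_nat s \<omega>)) h"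
    by (simp add: S.PiM_iter)
  also have "\<dots> = integral\<^sup>N (measure_pmf (bernoulli_pmf p2) \<Otimes>\<^sub>M CMs p2) (\<lambda>x. h (case_prod case_nat x))"
    by (rule nn_integral_distr[OF m]) (simp add: assms(3))
  also have "\<dots> = ennreal p2 * (\<integral>\<^sup>+ w. h (case_nat True w) \<partial>CMs p2) + ennreal (1 - p2) * (\<integral>\<^sup>+ w. h (case_nat False w) \<partial>CMs p2)"
    using dec[OF assms(1,2) prob_space_imp_sigma_finite[OF pCM], of "\<lambda>x. h (case_prod case_nat x)"]
      measurable_compose[OF m assms(3)] by simp
  finally show ?thesis .
qed

lemma coin_Suc:
  assumes "0 \<le> p2" "p2 \<le> 1" "h \<in> borel_measurable (CMs p2)"
  shows "(\<integral>\<^sup>+ w. h (\<lambda>i. w (Suc i)) \<partial>CMs p2) = integral\<^sup>N (CMs p2) h"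
proof -
  have "(\<integral>\<^sup>+ w. h (\<lambda>i. w (Suc i)) \<partial>CMs p2) = ennreal p2 * integral\<^sup>N (CMs p2) h + ennreal (1 - p2) * integral\<^sup>N (CMs p2) h"
    using coin_split[OF assms(1,2) measurable_compose[OF shift_meas assms(3)]] by simp
  also have "\<dots> = integral\<^sup>N (CMs p2) h"
    using assms by (simp add: distrib_right[symmetric] ennreal_plus[symmetric])
  finally show ?thesis .
qed



lemma memoryless:
  fixes g :: "real \<Rightarrow> ennreal"
  assumes p: "0 < p1" "p1 < 1" and t: "0 \<le> t" and g[measurable]: "g \<in> borel_measurable borel"
  shows "(\<integral>\<^sup>+ u. indicator {t..} u * g (u - t) \<partial>EMs p1) = ennreal ((1 - p1) powr t) * integral\<^sup>N (EMs p1) g"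
proof -
  define l where "l = - ln (1 - p1)"
  have l: "0 < l" using p by (simp add: l_def)
  have q: "(1 - p1) powr t = exp (- t * l)" using p by (simp add: l_def powr_def)
  have "(\<integral>\<^sup>+ u. indicator {t..} u * g (u - t) \<partial>EMs p1) =
      (\<integral>\<^sup>+ u. ennreal (exponential_density l u) * (indicator {t..} u * g (u - t)) \<partial>lborel)"
    unfolding l_def by (rule nn_integral_density) auto
  also have "\<dots> = (\<integral>\<^sup>+ u. ennreal (exponential_density l (t + 1 * u)) * (indicator {t..} (t + 1 * u) * g (t + 1 * u - t)) \<partial>lborel)"
    by (subst nn_integral_real_affine[where c=1 and t=t]) auto
  also have "\<dots> = (\<integral>\<^sup>+ u. ennreal ((1 - p1) powr t) * (ennreal (exponential_density l u) * g u) \<partial>lborel)"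
  proof (rule nn_integral_cong)
    fix u :: real
    show "ennreal (exponential_density l (t + 1 * u)) * (indicator {t..} (t + 1 * u) * g (t + 1 * u - t)) =
        ennreal ((1 - p1) powr t) * (ennreal (exponential_density l u) * g u)"
    proof (cases "u < 0")
      case True then show ?thesis by (simp add: exponential_density_def)
    next
      case False
      then have "exponential_density l (t + 1 * u) = (1 - p1) powr t * exponential_density l u"
        using t by (simp add: exponential_density_def q algebra_simps flip: exp_add)
      then show ?thesis using False l t
        by (simp add: ennreal_mult'' mult.assoc exponential_density_nonneg)
    qed
  qed
  also have "\<dots> = ennreal ((1 - p1) powr t) * (\<integral>\<^sup>+ u. ennreal (exponential_density l u) * g u \<partial>lborel)"
    by (rule nn_integral_cmult) auto
  also have "(\<integral>\<^sup>+ u. ennreal (exponential_density l u) * g u \<partial>lborel) = integral\<^sup>N (EMs p1) g"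
    unfolding l_def by (rule nn_integral_density[symmetric]) auto
  finally show ?thesis .
qed



definition "Gf p2 c \<pi> u = (\<integral>\<^sup>+ coin. run_time c \<pi> (True, u, coin) \<partial>CMs p2)"
definition "Bf p2 c \<pi> = (\<integral>\<^sup>+ coin. run_time c \<pi> (False, 0, coin) \<partial>CMs p2)"
definition "Af p1 p2 c \<pi> = (\<integral>\<^sup>+ u. Gf p2 c \<pi> u \<partial>EMs p1)"

context
  fixes p1 p2 c :: real
  assumes p1: "0 < p1" "p1 < 1" and p2: "0 < p2" "p2 < 1" and c: "0 \<le> c"
begin

lemma G_meas: "semi_fractional \<pi> \<Longrightarrow> Gf p2 c \<pi> \<in> borel_measurable borel"
proof -
  assume sf: "semi_fractional \<pi>"
  have "(\<lambda>u. \<integral>\<^sup>+ coin. run_time c \<pi> (True, u, coin) \<partial>CMs p2) \<in> borel_measurable (EMs p1)"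
    using sigma_finite_measure.borel_measurable_nn_integral_fst[OF prob_space_imp_sigma_finite[OF pCM]
        run_meas_d[OF sf c, of True p1 p2]] by simp
  moreover have "borel_measurable (EMs p1) = borel_measurable borel"
    by (rule measurable_cong_sets) auto
  ultimately show ?thesis unfolding Gf_def[abs_def] by simp
qed

lemma exp_dec:
  assumes sf: "semi_fractional \<pi>" and x: "0 \<le> x" "x \<le> 1"
  shows "exp_time p1 p2 c x \<pi> = ennreal x * Af p1 p2 c \<pi> + ennreal (1 - x) * Bf p2 c \<pi>"
proof -
  interpret E: prob_space "EMs p1" using pEM[OF p1] .
  interpret CM: prob_space "CMs p2" using pCM .
  have sN: "sigma_finite_measure (EMs p1 \<Otimes>\<^sub>M CMs p2)"
    by (rule prob_space_imp_sigma_finite, rule prob_space_pair) unfold_locales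
  have "exp_time p1 p2 c x \<pi> = ennreal x * (\<integral>\<^sup>+ w. run_time c \<pi> (True, w) \<partial>(EMs p1 \<Otimes>\<^sub>M CMs p2))
     + ennreal (1 - x) * (\<integral>\<^sup>+ w. run_time c \<pi> (False, w) \<partial>(EMs p1 \<Otimes>\<^sub>M CMs p2))"
    unfolding exp_time_def door_eq by (rule dec[OF x sN run_meas[OF sf c]])
  also have "(\<integral>\<^sup>+ w. run_time c \<pi> (True, w) \<partial>(EMs p1 \<Otimes>\<^sub>M CMs p2)) = Af p1 p2 c \<pi>"
    unfolding Af_def Gf_def
    using CM.nn_integral_fst[OF run_meas_d[OF sf c, of True p1 p2]] by simp
  also have "(\<integral>\<^sup>+ w. run_time c \<pi> (False, w) \<partial>(EMs p1 \<Otimes>\<^sub>M CMs p2)) = (\<integral>\<^sup>+ u. Bf p2 c \<pi> \<partial>EMs p1)"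
  proof -
    have "\<And>u. (\<integral>\<^sup>+ coin. run_time c \<pi> (False, u, coin) \<partial>CMs p2) = Bf p2 c \<pi>"
      unfolding Bf_def by (rule nn_integral_cong, rule run_False)
    then show ?thesis
      using CM.nn_integral_fst[OF run_meas_d[OF sf c, of False p1 p2], symmetric] by simp
  qed
  also have "(\<integral>\<^sup>+ u. Bf p2 c \<pi> \<partial>EMs p1) = Bf p2 c \<pi>"
    using E.emeasure_space_1 by simp
  finally show ?thesis .
qed

lemma G_K1:
  assumes sf: "semi_fractional \<pi>" and t: "0 \<le> t"
  shows "Gf p2 c (kcons (K1 t) \<pi>) u = ennreal t + Gf p2 c \<pi> (u - t)"
proof -
  interpret CM: prob_space "CMs p2" using pCM .
  have m: "(\<lambda>coin. run_time c \<pi> (True, u - t, coin)) \<in> borel_measurable (CMs p2)"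
    by (rule run_meas_u[OF sf c])
  have "Gf p2 c (kcons (K1 t) \<pi>) u = (\<integral>\<^sup>+ coin. ennreal t + run_time c \<pi> (True, u - t, \<lambda>i. coin (Suc i)) \<partial>CMs p2)"
    unfolding Gf_def by (rule nn_integral_cong) (simp add: run_K1[OF sf c t])
  also have "\<dots> = (\<integral>\<^sup>+ coin. ennreal t \<partial>CMs p2) + (\<integral>\<^sup>+ coin. run_time c \<pi> (True, u - t, \<lambda>i. coin (Suc i)) \<partial>CMs p2)"
    by (rule nn_integral_add) (auto intro: measurable_compose[OF shift_meas m])
  also have "\<dots> = ennreal t + Gf p2 c \<pi> (u - t)"
    unfolding Gf_def using coin_Suc[OF _ _ m] p2 CM.emeasure_space_1 by simp
  finally show ?thesis .
qed

lemma B_K1: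
  assumes sf: "semi_fractional \<pi>" and t: "0 \<le> t"
  shows "Bf p2 c (kcons (K1 t) \<pi>) = ennreal t + Bf p2 c \<pi>"
proof -
  interpret CM: prob_space "CMs p2" using pCM .
  have m: "(\<lambda>coin. run_time c \<pi> (False, 0, coin)) \<in> borel_measurable (CMs p2)"
    by (rule run_meas_u[OF sf c])
  have "Bf p2 c (kcons (K1 t) \<pi>) = (\<integral>\<^sup>+ coin. ennreal t + run_time c \<pi> (False, 0, \<lambda>i. coin (Suc i)) \<partial>CMs p2)"
    unfolding Bf_def by (rule nn_integral_cong) (simp add: run_K1[OF sf c t] run_False[of c \<pi> "- t" _ 0])
  also have "\<dots> = (\<integral>\<^sup>+ coin. ennreal t \<partial>CMs p2) + (\<integral>\<^sup>+ coin. run_time c \<pi> (False, 0, \<lambda>i. coin (Suc i)) \<partial>CMs p2)"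
    by (rule nn_integral_add) (auto intro: measurable_compose[OF shift_meas m])
  also have "\<dots> = ennreal t + Bf p2 c \<pi>"
    unfolding Bf_def using coin_Suc[OF _ _ m] p2 CM.emeasure_space_1 by simp
  finally show ?thesis .
qed

lemma G_neg: "semi_fractional \<pi> \<Longrightarrow> u \<le> 0 \<Longrightarrow> Gf p2 c \<pi> u = Bf p2 c \<pi>"
  unfolding Gf_def Bf_def by (rule nn_integral_cong) (rule run_True_neg)

lemma EM_less: "0 \<le> t \<Longrightarrow> emeasure (EMs p1) {..<t} = ennreal (1 - (1 - p1) powr t)"
proof -
  assume t: "0 \<le> t"
  interpret E: prob_space "EMs p1" using pEM[OF p1] .
  have "emeasure (EMs p1) {t..} = (\<integral>\<^sup>+ u. indicator {t..} u * (\<lambda>_. 1) (u - t) \<partial>EMs p1)"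
    by simp
  also have "\<dots> = ennreal ((1 - p1) powr t)"
    using memoryless[OF p1 t, of "\<lambda>_. 1"] E.emeasure_space_1 by simp
  finally have e: "emeasure (EMs p1) {t..} = ennreal ((1 - p1) powr t)" .
  then have m: "measure (EMs p1) {t..} = (1 - p1) powr t"
    by (simp add: E.emeasure_eq_measure)
  have "measure (EMs p1) {..<t} = measure (EMs p1) (space (EMs p1) - {t..})"
    by (intro arg_cong[where f="measure (EMs p1)"]) auto
  also have "\<dots> = 1 - (1 - p1) powr t"
    by (subst E.prob_compl) (auto simp: m)
  finally show ?thesis by (simp add: E.emeasure_eq_measure)
qed

lemma A_K1:
  assumes sf: "semi_fractional \<pi>" and t: "0 \<le> t"
  shows "Af p1 p2 c (kcons (K1 t) \<pi>) = ennreal t + (ennreal (1 - (1 - p1) powr t) * Bf p2 c \<pi>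
     + ennreal ((1 - p1) powr t) * Af p1 p2 c \<pi>)"
proof -
  interpret E: prob_space "EMs p1" using pEM[OF p1] .
  note gm = G_meas[OF sf]
  have gb: "(\<lambda>u. Gf p2 c \<pi> (u - t)) \<in> borel_measurable borel"
      by (rule measurable_compose[OF _ gm]) simp
  have gm': "(\<lambda>u. Gf p2 c \<pi> (u - t)) \<in> borel_measurable (EMs p1)"
  proof -
    note gb
    moreover have "borel_measurable (EMs p1) = borel_measurable borel"
      by (rule measurable_cong_sets) auto
    ultimately show ?thesis by simp
  qed
  have "Af p1 p2 c (kcons (K1 t) \<pi>) = (\<integral>\<^sup>+ u. ennreal t + Gf p2 c \<pi> (u - t) \<partial>EMs p1)"
    unfolding Af_def by (rule nn_integral_cong) (simp add: G_K1[OF sf t])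
  also have "\<dots> = (\<integral>\<^sup>+ u. ennreal t \<partial>EMs p1) + (\<integral>\<^sup>+ u. Gf p2 c \<pi> (u - t) \<partial>EMs p1)"
    by (rule nn_integral_add) (auto intro: gm' gb)
  also have "(\<integral>\<^sup>+ u. ennreal t \<partial>EMs p1) = ennreal t" using E.emeasure_space_1 by simp
  also have "(\<integral>\<^sup>+ u. Gf p2 c \<pi> (u - t) \<partial>EMs p1) =
      (\<integral>\<^sup>+ u. indicator {..<t} u * Bf p2 c \<pi> + indicator {t..} u * Gf p2 c \<pi> (u - t) \<partial>EMs p1)"
  proof (rule nn_integral_cong)
    fix u
    show "Gf p2 c \<pi> (u - t) = indicator {..<t} u * Bf p2 c \<pi> + indicator {t..} u * Gf p2 c \<pi> (u - t)"
      by (cases "u < t") (auto simp: G_neg[OF sf] indicator_def)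
  qed
  also have "\<dots> = (\<integral>\<^sup>+ u. indicator {..<t} u * Bf p2 c \<pi> \<partial>EMs p1) + (\<integral>\<^sup>+ u. indicator {t..} u * Gf p2 c \<pi> (u - t) \<partial>EMs p1)"
    by (rule nn_integral_add) (auto intro!: borel_measurable_times_ennreal borel_measurable_indicator gb)
  also have "(\<integral>\<^sup>+ u. indicator {..<t} u * Bf p2 c \<pi> \<partial>EMs p1) = ennreal (1 - (1 - p1) powr t) * Bf p2 c \<pi>"
    by (subst nn_integral_multc) (auto simp: EM_less[OF t])
  also have "(\<integral>\<^sup>+ u. indicator {t..} u * Gf p2 c \<pi> (u - t) \<partial>EMs p1) = ennreal ((1 - p1) powr t) * Af p1 p2 c \<pi>"
    unfolding Af_def by (rule memoryless[OF p1 t gm])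
  finally show ?thesis .
qed

lemma G_K2:
  assumes sf: "semi_fractional \<pi>" and u: "0 < u"
  shows "Gf p2 c (kcons K2 \<pi>) u = ennreal c + Gf p2 c \<pi> u"
proof -
  interpret CM: prob_space "CMs p2" using pCM .
  have m: "(\<lambda>coin. run_time c \<pi> (True, u, coin)) \<in> borel_measurable (CMs p2)"
    by (rule run_meas_u[OF sf c])
  have "Gf p2 c (kcons K2 \<pi>) u = (\<integral>\<^sup>+ coin. ennreal c + run_time c \<pi> (True, u, \<lambda>i. coin (Suc i)) \<partial>CMs p2)"
    unfolding Gf_def by (rule nn_integral_cong) (simp add: run_K2[OF sf c] u not_le[THEN iffD2, OF u])
  also have "\<dots> = (\<integral>\<^sup>+ coin. ennreal c \<partial>CMs p2) + (\<integral>\<^sup>+ coin. run_time c \<pi> (True, u, \<lambda>i. coin (Suc i)) \<partial>CMs p2)"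
    by (rule nn_integral_add) (auto intro: measurable_compose[OF shift_meas m])
  also have "\<dots> = ennreal c + Gf p2 c \<pi> u"
    unfolding Gf_def using coin_Suc[OF _ _ m] p2 CM.emeasure_space_1 by simp
  finally show ?thesis .
qed

lemma AE_pos: "AE u in EMs p1. 0 < u"
proof -
  have "AE u in lborel. (u::real) \<noteq> 0" by (rule AE_lborel_singleton)
  then have "AE u in lborel. 0 < ennreal (exponential_density (- ln (1 - p1)) u) \<longrightarrow> 0 < u"
    by eventually_elim (auto simp: exponential_density_def not_less)
  then show ?thesis by (subst AE_density) auto
qed

lemma A_K2:
  assumes sf: "semi_fractional \<pi>"
  shows "Af p1 p2 c (kcons K2 \<pi>) = ennreal c + Af p1 p2 c \<pi>"
proof -
  interpret E: prob_space "EMs p1" using pEM[OF p1] .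
  note gm = G_meas[OF sf]
  have "Af p1 p2 c (kcons K2 \<pi>) = (\<integral>\<^sup>+ u. ennreal c + Gf p2 c \<pi> u \<partial>EMs p1)"
    unfolding Af_def by (rule nn_integral_cong_AE) (use AE_pos in \<open>auto elim!: eventually_mono simp: G_K2[OF sf]\<close>)
  also have "\<dots> = (\<integral>\<^sup>+ u. ennreal c \<partial>EMs p1) + (\<integral>\<^sup>+ u. Gf p2 c \<pi> u \<partial>EMs p1)"
    by (rule nn_integral_add) (auto intro: gm)
  also have "(\<integral>\<^sup>+ u. ennreal c \<partial>EMs p1) = ennreal c" using E.emeasure_space_1 by simp
  finally show ?thesis unfolding Af_def .
qed

lemma B_K2:
  assumes sf: "semi_fractional \<pi>"
  shows "Bf p2 c (kcons K2 \<pi>) = ennreal c + ennreal (1 - p2) * Bf p2 c \<pi>"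
proof -
  interpret CM: prob_space "CMs p2" using pCM .
  have m: "(\<lambda>coin. run_time c \<pi> (False, 0, coin)) \<in> borel_measurable (CMs p2)"
    by (rule run_meas_u[OF sf c])
  have m2: "(\<lambda>coin. run_time c \<pi> (False, 0, \<lambda>i. coin (Suc i))) \<in> borel_measurable (CMs p2)"
    by (rule measurable_compose[OF shift_meas m])
  have p0: "(\<lambda>coin. coin 0) \<in> measurable (CMs p2) (count_space UNIV)"
  proof -
    have "(\<lambda>coin. coin 0) \<in> measurable (CMs p2) (measure_pmf (bernoulli_pmf p2))"
      by (rule measurable_component_singleton) simp
    moreover have "measurable (CMs p2) (measure_pmf (bernoulli_pmf p2)) = measurable (CMs p2) (count_space UNIV)"
      by (rule measurable_cong_sets) auto
    ultimately show ?thesis by simp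
  qed
  let ?h = "\<lambda>coin. if coin 0 then 0 else run_time c \<pi> (False, 0, \<lambda>i. coin (Suc i))"
  have hm: "?h \<in> borel_measurable (CMs p2)"
    by (rule measurable_If[OF measurable_const m2]) (use measurable_sets[OF p0, of "{True}"] in \<open>auto simp: vimage_def Int_def conj_commute\<close>)
  have "Bf p2 c (kcons K2 \<pi>) = (\<integral>\<^sup>+ coin. ennreal c + ?h coin \<partial>CMs p2)"
    unfolding Bf_def by (rule nn_integral_cong) (simp add: run_K2[OF sf c])
  also have "\<dots> = (\<integral>\<^sup>+ coin. ennreal c \<partial>CMs p2) + (\<integral>\<^sup>+ coin. ?h coin \<partial>CMs p2)"
    by (rule nn_integral_add) (auto intro: hm)
  also have "(\<integral>\<^sup>+ coin. ?h coin \<partial>CMs p2) = ennreal (1 - p2) * Bf p2 c \<pi>"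
    using coin_split[OF _ _ hm] p2 unfolding Bf_def by simp
  finally show ?thesis using CM.emeasure_space_1 by simp
qed

end

lemma alg_comb: "0 \<le> a \<Longrightarrow> 0 \<le> b \<Longrightarrow> ennreal a * X + ennreal b * X = ennreal (a + b) * X"
  by (simp add: distrib_right ennreal_plus)



theorem mainTheorem12:
  fixes p1 p2 c x t :: real and \<pi> :: "nat \<Rightarrow> knock"
  assumes "0 < p1" "p1 < 1" "0 < p2" "p2 < 1" "0 < c"
    and "0 \<le> x" "x \<le> 1" "0 \<le> t" "semi_fractional \<pi>"
  shows "(exp_time p1 p2 c x (kcons (K1 t) \<pi>)
           = ennreal t + exp_time p1 p2 c ((1 - p1) powr t * x) \<pi>)
         \<and> (exp_time p1 p2 c x (kcons K2 \<pi>)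
           = ennreal c + ennreal ((1 - p2) + p2 * x)
               * exp_time p1 p2 c (x / ((1 - p2) + p2 * x)) \<pi>)"
proof
  note p = assms(1-4) and c = less_imp_le[OF assms(5)] and x = assms(6,7) and t = assms(8)
    and sf = assms(9)
  define A where "A = Af p1 p2 c \<pi>"
  define B where "B = Bf p2 c \<pi>"
  define Q where "Q = (1 - p1) powr t"
  have Q: "0 \<le> Q" "Q \<le> 1" using p t by (auto simp: Q_def intro: powr_le1)
  have Qx: "0 \<le> Q * x" "Q * x \<le> 1" using Q x by (auto intro: mult_le_one)
  have sf1: "semi_fractional (kcons (K1 t) \<pi>)" by (rule sf_kcons[OF sf]) (simp add: t)
  have "exp_time p1 p2 c x (kcons (K1 t) \<pi>) =
      ennreal x * (ennreal t + (ennreal (1 - Q) * B + ennreal Q * A)) + ennreal (1 - x) * (ennreal t + B)"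
    using exp_dec[OF p c sf1 x] A_K1[OF p c sf t] B_K1[OF p c sf t]
    by (simp add: A_def B_def Q_def)
  also have "\<dots> = (ennreal x * ennreal t + ennreal (1 - x) * ennreal t)
      + ((ennreal x * ennreal (1 - Q)) * B + ennreal (1 - x) * B) + (ennreal x * ennreal Q) * A"
    by (simp add: algebra_simps)
  also have "\<dots> = ennreal t + (ennreal (Q * x) * A + ennreal (1 - Q * x) * B)"
  proof -
    have 1: "ennreal x * ennreal t + ennreal (1 - x) * ennreal t = ennreal t"
    proof -
      have "ennreal x * ennreal t + ennreal (1 - x) * ennreal t = ennreal (x * t) + ennreal ((1 - x) * t)"
        using x t by (simp add: ennreal_mult)
      also have "\<dots> = ennreal (x * t + (1 - x) * t)" using x t by (simp add: ennreal_plus)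
      finally show ?thesis by (simp add: algebra_simps)
    qed
    have 2: "(ennreal x * ennreal (1 - Q)) * B + ennreal (1 - x) * B = ennreal (1 - Q * x) * B"
    proof -
      have "(ennreal x * ennreal (1 - Q)) * B + ennreal (1 - x) * B = ennreal (x * (1 - Q)) * B + ennreal (1 - x) * B"
        using x Q by (simp add: ennreal_mult)
      also have "\<dots> = ennreal (x * (1 - Q) + (1 - x)) * B" using x Q by (intro alg_comb) auto
      finally show ?thesis by (simp add: algebra_simps)
    qed
    have 3: "ennreal x * ennreal Q = ennreal (Q * x)"
      using x Q by (simp add: ennreal_mult[symmetric] mult.commute)
    show ?thesis unfolding 1 2 3 by (simp add: ac_simps)
  qed
  also have "\<dots> = ennreal t + exp_time p1 p2 c ((1 - p1) powr t * x) \<pi>"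
    using exp_dec[OF p c sf Qx] by (simp add: A_def B_def Q_def)
  finally show "exp_time p1 p2 c x (kcons (K1 t) \<pi>) = ennreal t + exp_time p1 p2 c ((1 - p1) powr t * x) \<pi>" .
next
  note p = assms(1-4) and c = less_imp_le[OF assms(5)] and x = assms(6,7) and t = assms(8)
    and sf = assms(9)
  define A where "A = Af p1 p2 c \<pi>"
  define B where "B = Bf p2 c \<pi>"
  define s where "s = (1 - p2) + p2 * x"
  have s: "0 < s" using p x by (simp add: s_def add_pos_nonneg)
  have pp: "0 \<le> (1 - p2) * (1 - x)" using p x by simp
  have y: "0 \<le> x / s" "x / s \<le> 1" using s x p pp by (auto simp: s_def field_simps algebra_simps)
  have sy: "s * (x / s) = x" "s * (1 - x / s) = (1 - x) * (1 - p2)"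
    using s by (auto simp: s_def field_simps)
  have sf2: "semi_fractional (kcons K2 \<pi>)" by (rule sf_kcons[OF sf]) simp
  have "exp_time p1 p2 c x (kcons K2 \<pi>) =
      ennreal x * (ennreal c + A) + ennreal (1 - x) * (ennreal c + ennreal (1 - p2) * B)"
    using exp_dec[OF p c sf2 x] A_K2[OF p c sf] B_K2[OF p c sf]
    by (simp add: A_def B_def)
  also have "\<dots> = (ennreal x * ennreal c + ennreal (1 - x) * ennreal c)
      + (ennreal x * A + (ennreal (1 - x) * ennreal (1 - p2)) * B)"
    by (simp add: algebra_simps)
  also have "\<dots> = ennreal c + (ennreal (s * (x / s)) * A + ennreal (s * (1 - x / s)) * B)"
  proof -
    have 1: "ennreal x * ennreal c + ennreal (1 - x) * ennreal c = ennreal c"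
    proof -
      have "ennreal x * ennreal c + ennreal (1 - x) * ennreal c = ennreal (x * c) + ennreal ((1 - x) * c)"
        using x c by (simp add: ennreal_mult)
      also have "\<dots> = ennreal (x * c + (1 - x) * c)" using x c by (simp add: ennreal_plus)
      finally show ?thesis by (simp add: algebra_simps)
    qed
    have 2: "ennreal (1 - x) * ennreal (1 - p2) = ennreal ((1 - x) * (1 - p2))"
      using x p by (simp add: ennreal_mult)
    show ?thesis unfolding 1 2 sy ..
  qed
  also have "\<dots> = ennreal c + ennreal s * (ennreal (x / s) * A + ennreal (1 - x / s) * B)"
  proof -
    have e2: "ennreal (s * (1 - x / s)) = ennreal s * ennreal (1 - x / s)"
      using s y by (intro ennreal_mult) auto
    show ?thesis unfolding ennreal_mult[OF less_imp_le[OF s] y(1)] e2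
      by (simp only: distrib_left mult.assoc)
  qed
  also have "\<dots> = ennreal c + ennreal ((1 - p2) + p2 * x) * exp_time p1 p2 c (x / ((1 - p2) + p2 * x)) \<pi>"
    using exp_dec[OF p c sf y] by (simp add: A_def B_def s_def)
  finally show "exp_time p1 p2 c x (kcons K2 \<pi>) =
      ennreal c + ennreal ((1 - p2) + p2 * x) * exp_time p1 p2 c (x / ((1 - p2) + p2 * x)) \<pi>" .
qed

end
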